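(* Assume $D$ has at least one arc. The largest number of nodes $|W|$ over subsystem states $\psi^A_W$ belonging to $M_E$ equals the number of nodes of the largest transmission block of $D$; if $D$ has no transmission block, this maximum equals $2$.
   Context: $D=(V,A)$ is a directed graph on $V=\{1,\dots,N\}$ with rates $T_{ij}\ge0$, $T_{ij}>0$ iff $(j,i)\in A$, $T_{ii}=0$. A subsystem state is a pair $(W,A)$ with $W\subseteq V$ nonempty and $A:W\to\{S,I,R\}$, written $\psi^A_W$; $S_i$, $I_i$ denote the single-node states, and for $n\notin W$, $\psi^A_WI_n$ denotes the state on $W\cup\{n\}$ agreeing with $A$ on $W$ and with $n$ in state $I$. For $k\in W$, $h^X_k(\psi^A_W)$ is the state obtained by changing the state of $k$ to $X$. $\mathrm{IN}(X)$ is the set of nodes from which some member of $X$ is reachable by a directed path; for disjoint nonempty $X,Y,Z$, $f_E(X,Y,Z)=1$ iff $\mathrm{IN}(X)\cap\mathrm{IN}(Y)=\emptyset$ in $D-Z$, else $0$; by convention $f_E(\{n\},\emptyset,\{k\})=0$. Induced set: for a state $\psi^A_W$ with $A:W\to\{S,I\}$, the states it induces are (i) $\psi^A_W$ itself and $h^S_k(\psi^A_W)$ for each $k\in W$ with $A_k=I$ such that $T_{kn}>0$ for some $n\in W$ with $A_n=I$; (ii) for each $k\in W$ and $n\in V\setminus W$ with $T_{kn}>0$: if $f_E(\{n\},W\setminus\{k\},\{k\})=0$, the state $h^S_k(\psi^A_W)I_n$; if it equals $1$, the states $h^S_k(\psi^A_W)$, $S_kI_n$ and $S_k$. $M_E$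 is the smallest set of subsystem states containing $S_i$ and $I_i$ for all $i\in V$ and closed under taking induced states (these are exactly the states appearing in the exact closed moment equations for Markovian SIR dynamics obtained using the closure $\langle\psi^A_WI_n\rangle=\langle\psi^A_W\rangle\langle S_kI_n\rangle/\langle S_k\rangle$ wherever $f_E=1$). For $W\subseteq V$, $D[W]$ is the subgraph with node set $W$ and all arcs of $D$ with both endpoints in $W$. A graph is biconnected if it has at least three vertices, is connected, and stays connected after deleting any single vertex. $D[W]$ is a directed sub-block if some node of $W$ is reachable by a directed path within $D[W]$ from every other node of $W$, and the underlying undirected graph of $D[W]$ is biconnected. $D[W]$ is a transmission block if it is a directed sub-block and there is no $U\supsetneq W$ with $D[U]$ a directed sub-block. *)

theory Defs
  imports Complex_Main
begin

datatype st = S | I | R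

text \<open>A subsystem state psi^A_W is a finite map with domain W.\<close>
type_synonym state = "nat \<Rightarrow> st option"

definition V :: "nat \<Rightarrow> nat set" where
  "V N = {1..N}"

text \<open>Arc (j,i) of D, i.e. j -> i, iff T i j > 0 (both endpoints in V).\<close>
definition arc :: "nat \<Rightarrow> (nat \<Rightarrow> nat \<Rightarrow> real) \<Rightarrow> nat \<Rightarrow> nat \<Rightarrow> bool" where
  "arc N T j i \<longleftrightarrow> j \<in> V N \<and> i \<in> V N \<and> T i j > 0"

definition arcs_in :: "nat \<Rightarrow> (nat \<Rightarrow> nat \<Rightarrow> real) \<Rightarrow> nat set \<Rightarrow> (nat \<times> nat) set" where
  "arcs_in N T U = {(j, i). j \<in> U \<and> i \<in> U \<and> arc N T j i}"

definition IN :: "nat \<Rightarrow> (nat \<Rightarrow> nat \<Rightarrow> real) \<Rightarrow> nat set \<Rightarrow> nat set \<Rightarrow> nat set" where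
  "IN N T Z X = {u \<in> V N - Z. \<exists>x\<in>X. (u, x) \<in> (arcs_in N T (V N - Z))\<^sup>*}"

text \<open>f_E(X,Y,Z); with the convention f_E({n},{},{k}) = 0 (Y empty gives 0).\<close>
definition fE :: "nat \<Rightarrow> (nat \<Rightarrow> nat \<Rightarrow> real) \<Rightarrow> nat set \<Rightarrow> nat set \<Rightarrow> nat set \<Rightarrow> bool" where
  "fE N T X Y Z \<longleftrightarrow> Y \<noteq> {} \<and> IN N T Z X \<inter> IN N T Z Y = {}"

definition induced :: "nat \<Rightarrow> (nat \<Rightarrow> nat \<Rightarrow> real) \<Rightarrow> state \<Rightarrow> state set" where
  "induced N T \<psi> =
     {\<psi>}
   \<union> {\<psi>(k \<mapsto> S) | k. k \<in> dom \<psi> \<and> \<psi> k = Some I \<and>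
                        (\<exists>n\<in>dom \<psi>. \<psi> n = Some I \<and> T k n > 0)}
   \<union> {\<psi>(k \<mapsto> S, n \<mapsto> I) | k n. k \<in> dom \<psi> \<and> n \<in> V N - dom \<psi> \<and> T k n > 0 \<and>
                        \<not> fE N T {n} (dom \<psi> - {k}) {k}}
   \<union> \<Union> {{\<psi>(k \<mapsto> S), [k \<mapsto> S, n \<mapsto> I], [k \<mapsto> S]} | k n.
                        k \<in> dom \<psi> \<and> n \<in> V N - dom \<psi> \<and> T k n > 0 \<and>
                        fE N T {n} (dom \<psi> - {k}) {k}}"

inductive_set ME :: "nat \<Rightarrow> (nat \<Rightarrow> nat \<Rightarrow> real) \<Rightarrow> state set" for N T where
  single_S: "i \<in> V N \<Longrightarrow> [i \<mapsto> S] \<in> ME N T"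
| single_I: "i \<in> V N \<Longrightarrow> [i \<mapsto> I] \<in> ME N T"
| induce: "\<psi> \<in> ME N T \<Longrightarrow> ran \<psi> \<subseteq> {S, I} \<Longrightarrow> \<phi> \<in> induced N T \<psi> \<Longrightarrow> \<phi> \<in> ME N T"

definition und_edges :: "nat \<Rightarrow> (nat \<Rightarrow> nat \<Rightarrow> real) \<Rightarrow> nat set \<Rightarrow> (nat \<times> nat) set" where
  "und_edges N T U = {(u, v). u \<in> U \<and> v \<in> U \<and> (arc N T u v \<or> arc N T v u)}"

definition und_connected :: "nat \<Rightarrow> (nat \<Rightarrow> nat \<Rightarrow> real) \<Rightarrow> nat set \<Rightarrow> bool" where
  "und_connected N T U \<longleftrightarrow> (\<forall>u\<in>U. \<forall>v\<in>U. (u, v) \<in> (und_edges N T U)\<^sup>*)"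

definition und_biconnected :: "nat \<Rightarrow> (nat \<Rightarrow> nat \<Rightarrow> real) \<Rightarrow> nat set \<Rightarrow> bool" where
  "und_biconnected N T U \<longleftrightarrow> finite U \<and> card U \<ge> 3 \<and> und_connected N T U \<and>
     (\<forall>x\<in>U. und_connected N T (U - {x}))"

definition directed_subblock :: "nat \<Rightarrow> (nat \<Rightarrow> nat \<Rightarrow> real) \<Rightarrow> nat set \<Rightarrow> bool" where
  "directed_subblock N T W \<longleftrightarrow> W \<subseteq> V N \<and>
     (\<exists>r\<in>W. \<forall>u\<in>W. (u, r) \<in> (arcs_in N T W)\<^sup>*) \<and> und_biconnected N T W"

definition transmission_block :: "nat \<Rightarrow> (nat \<Rightarrow> nat \<Rightarrow> real) \<Rightarrow> nat set \<Rightarrow> bool" where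
  "transmission_block N T W \<longleftrightarrow> directed_subblock N T W \<and>
     \<not> (\<exists>U. W \<subset> U \<and> directed_subblock N T U)"

end

theory Submission
  imports Defs
begin



lemma arc_irrefl: "\<forall>i\<in>V N. T i i = 0 \<Longrightarrow> \<not> arc N T a a"
  by (auto simp: arc_def)

lemma arcs_in_mono: "U \<subseteq> U' \<Longrightarrow> arcs_in N T U \<subseteq> arcs_in N T U'"
  by (auto simp: arcs_in_def)

lemma arcs_in_rt_mono: "(a,b) \<in> (arcs_in N T U)\<^sup>* \<Longrightarrow> U \<subseteq> U' \<Longrightarrow> (a,b) \<in> (arcs_in N T U')\<^sup>*"
  using rtrancl_mono[OF arcs_in_mono] by blast

lemma und_mono: "U \<subseteq> U' \<Longrightarrow> und_edges N T U \<subseteq> und_edges N T U'"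
  by (auto simp: und_edges_def)

lemma und_rt_mono: "(a,b) \<in> (und_edges N T U)\<^sup>* \<Longrightarrow> U \<subseteq> U' \<Longrightarrow> (a,b) \<in> (und_edges N T U')\<^sup>*"
  using rtrancl_mono[OF und_mono] by blast

lemma und_sym: "(a,b) \<in> (und_edges N T U)\<^sup>* \<Longrightarrow> (b,a) \<in> (und_edges N T U)\<^sup>*"
proof -
  have "(und_edges N T U)\<inverse> = und_edges N T U" by (auto simp: und_edges_def)
  moreover assume "(a,b) \<in> (und_edges N T U)\<^sup>*"
  ultimately show ?thesis by (metis converse_iff rtrancl_converse)
qed

lemma arcs_und: "(a,b) \<in> (arcs_in N T U)\<^sup>* \<Longrightarrow> (a,b) \<in> (und_edges N T U)\<^sup>*"
proof -
  have "arcs_in N T U \<subseteq> und_edges N T U" by (auto simp: arcs_in_def und_edges_def)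
  then show "(a,b) \<in> (arcs_in N T U)\<^sup>* \<Longrightarrow> ?thesis" using rtrancl_mono by blast
qed

lemma rt_in_set: "(a,b) \<in> (arcs_in N T U)\<^sup>* \<Longrightarrow> a \<in> U \<Longrightarrow> b \<in> U"
  by (induction rule: rtrancl_induct) (auto simp: arcs_in_def)

lemma und_rt_in_set: "(a,b) \<in> (und_edges N T U)\<^sup>* \<Longrightarrow> a \<in> U \<Longrightarrow> b \<in> U"
  by (induction rule: rtrancl_induct) (auto simp: und_edges_def)

lemma rt_restrict:
  assumes "(a,b) \<in> Rel\<^sup>*" "\<And>v. (a,v) \<in> Rel\<^sup>* \<Longrightarrow> (v,b) \<in> Rel\<^sup>* \<Longrightarrow> v \<in> Q"
  shows "(a,b) \<in> (Rel \<inter> Q \<times> Q)\<^sup>*"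
  using assms
proof (induction rule: converse_rtrancl_induct)
  case base then show ?case by simp
next
  case (step y z)
  have "(z,b) \<in> (Rel \<inter> Q \<times> Q)\<^sup>*"
    using step.IH step.prems step.hyps by (meson converse_rtrancl_into_rtrancl)
  moreover have "y \<in> Q" "z \<in> Q" using step by (auto intro: converse_rtrancl_into_rtrancl)
  ultimately show ?case using step.hyps(1) by (meson IntI SigmaI converse_rtrancl_into_rtrancl)
qed

lemma arcs_in_Int: "arcs_in N T U \<inter> Q \<times> Q = arcs_in N T (U \<inter> Q)"
  by (auto simp: arcs_in_def)

lemma avoid:
  assumes "(a,b) \<in> Rel\<^sup>*" "b \<notin> C" "x \<notin> C"
    "\<And>c y. c \<in> C \<Longrightarrow> (c,y) \<in> Rel \<Longrightarrow> y \<in> C \<or> y = x"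
    "\<And>a y. (a,y) \<in> Rel \<Longrightarrow> y \<in> C \<Longrightarrow> a \<in> C \<or> a = x"
  shows "(a \<notin> C \<longrightarrow> (a,b) \<in> {(a,b)\<in>Rel. a\<notin>C \<and> b\<notin>C}\<^sup>*) \<and> (a \<in> C \<longrightarrow> (x,b) \<in> {(a,b)\<in>Rel. a\<notin>C \<and> b\<notin>C}\<^sup>*)"
  using assms(1)
proof (induction rule: converse_rtrancl_induct)
  case base then show ?case using assms(2) by simp
next
  case (step y z)
  show ?case
  proof (cases "y \<in> C")
    case True
    then show ?thesis using step assms(4)[OF True step.hyps(1)] by auto
  next
    case False
    show ?thesis
    proof (cases "z \<in> C")
      case True
      then have "y = x" using assms(5)[OF step.hyps(1)] False by auto
      then show ?thesis using step True by auto
    next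
      case False2: False
      then show ?thesis using step False
        by (auto intro: converse_rtrancl_into_rtrancl)
    qed
  qed
qed




lemma finite_V: "finite (V N)" by (simp add: V_def)

lemma und_connected_via:
  assumes "H \<subseteq> Sx" "und_connected N T H" "\<And>a. a \<in> Sx \<Longrightarrow> \<exists>h\<in>H. (a,h) \<in> (und_edges N T Sx)\<^sup>*"
  shows "und_connected N T Sx"
  unfolding und_connected_def
proof (intro ballI)
  fix a b assume a: "a \<in> Sx" and b: "b \<in> Sx"
  obtain h1 where h1: "h1 \<in> H" "(a,h1) \<in> (und_edges N T Sx)\<^sup>*" using assms(3)[OF a] by blast
  obtain h2 where h2: "h2 \<in> H" "(b,h2) \<in> (und_edges N T Sx)\<^sup>*" using assms(3)[OF b] by blast
  have "(h1,h2) \<in> (und_edges N T H)\<^sup>*" using assms(2) h1 h2 by (auto simp: und_connected_def)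
  then have "(h1,h2) \<in> (und_edges N T Sx)\<^sup>*" using und_rt_mono assms(1) by blast
  then show "(a,b) \<in> (und_edges N T Sx)\<^sup>*" using h1 h2 und_sym by (meson rtrancl_trans)
qed

lemma ear:
  assumes diag: "\<forall>i\<in>V N. T i i = 0"
    and UV: "U \<subseteq> V N" and rU: "r \<in> U" "\<forall>v\<in>U. (v,r) \<in> (arcs_in N T U)\<^sup>*"
    and conU: "und_connected N T U" and conUx: "\<forall>x\<in>U. und_connected N T (U - {x})"
    and k: "k \<in> U" and w: "w \<in> U" "w \<noteq> k" and n: "n \<in> V N" "n \<notin> U" and nk: "arc N T n k"
    and u: "u \<in> V N - {k}" and un: "(u,n) \<in> (arcs_in N T (V N - {k}))\<^sup>*"
    and uw: "(u,w) \<in> (arcs_in N T (V N - {k}))\<^sup>*"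
  shows "\<exists>U'. insert n U \<subseteq> U' \<and> directed_subblock N T U'"
proof -
  let ?RK = "arcs_in N T (V N - {k})"
  define good where "good P \<longleftrightarrow> P \<subseteq> V N - U \<and> n \<in> P \<and>
      (\<forall>p\<in>P. \<exists>z\<in>U. (p,z) \<in> (arcs_in N T (P \<union> U))\<^sup>*) \<and>
      (\<forall>p\<in>P. \<exists>z\<in>U-{k}. (p,z) \<in> (und_edges N T (P \<union> (U-{k})))\<^sup>*)" for P
  define P0 where "P0 = {v \<in> V N - U. (u,v) \<in> ?RK\<^sup>* \<and> ((v,n) \<in> ?RK\<^sup>* \<or> (v,w) \<in> ?RK\<^sup>*)}"
  have kV: "k \<in> V N" using k UV by auto
  have RKin: "a \<in> V N - {k}" if "(a,b) \<in> ?RK\<^sup>*" "b \<in> V N - {k}" "a \<noteq> b" for a b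
    using that by (induction rule: converse_rtrancl_induct) (auto simp: arcs_in_def)
  have RKin2: "b \<in> V N - {k}" if "(a,b) \<in> ?RK\<^sup>*" "a \<in> V N - {k}" for a b
    using rt_in_set[OF that] .
  have walkP0: "(p,t) \<in> (arcs_in N T (P0 \<union> (U - {k})))\<^sup>*"
    if "(u,p) \<in> ?RK\<^sup>*" "(p,t) \<in> ?RK\<^sup>*" "t = n \<or> t = w" for p t
  proof -
    have pV: "p \<in> V N - {k}" using RKin2[OF that(1) u] .
    have "(p,t) \<in> (?RK \<inter> (P0 \<union> (U-{k})) \<times> (P0 \<union> (U-{k})))\<^sup>*"
    proof (rule rt_restrict[OF that(2)])
      fix v assume pv: "(p,v) \<in> ?RK\<^sup>*" and vt: "(v,t) \<in> ?RK\<^sup>*"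
      have vV: "v \<in> V N - {k}" using RKin2[OF pv pV] .
      have "(u,v) \<in> ?RK\<^sup>*" using that(1) pv by simp
      then show "v \<in> P0 \<union> (U-{k})" using vV vt that(3) by (auto simp: P0_def)
    qed
    then show ?thesis unfolding arcs_in_Int using arcs_in_rt_mono by blast
  qed
  have goodP0: "good P0"
  proof -
    have "n \<in> P0" using n un by (auto simp: P0_def)
    moreover have "\<exists>z\<in>U. (p,z) \<in> (arcs_in N T (P0 \<union> U))\<^sup>*" if p: "p \<in> P0" for p
    proof -
      have up: "(u,p) \<in> ?RK\<^sup>*" using p by (auto simp: P0_def)
      consider "(p,n) \<in> ?RK\<^sup>*" | "(p,w) \<in> ?RK\<^sup>*" using p by (auto simp: P0_def)
      then show ?thesis
      proof cases
        case 1
        have "(p,n) \<in> (arcs_in N T (P0 \<union> U))\<^sup>*"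
          using walkP0[OF up 1] arcs_in_rt_mono by blast
        moreover have "(n,k) \<in> arcs_in N T (P0 \<union> U)" using nk k \<open>n \<in> P0\<close> by (auto simp: arcs_in_def)
        ultimately show ?thesis using k by (meson rtrancl.rtrancl_into_rtrancl)
      next
        case 2
        have "(p,w) \<in> (arcs_in N T (P0 \<union> U))\<^sup>*"
          using walkP0[OF up 2] arcs_in_rt_mono by blast
        then show ?thesis using w by blast
      qed
    qed
    moreover have "\<exists>z\<in>U-{k}. (p,z) \<in> (und_edges N T (P0 \<union> (U-{k})))\<^sup>*" if p: "p \<in> P0" for p
    proof -
      have up: "(u,p) \<in> ?RK\<^sup>*" using p by (auto simp: P0_def)
      have pt: "(p,n) \<in> ?RK\<^sup>* \<or> (p,w) \<in> ?RK\<^sup>*" using p by (auto simp: P0_def)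
      have "(u,p) \<in> (arcs_in N T (P0 \<union> (U - {k})))\<^sup>*"
      proof -
        have "(u,p) \<in> (?RK \<inter> (P0 \<union> (U-{k})) \<times> (P0 \<union> (U-{k})))\<^sup>*"
        proof (rule rt_restrict[OF up])
          fix v assume uv: "(u,v) \<in> ?RK\<^sup>*" and vp: "(v,p) \<in> ?RK\<^sup>*"
          have vV: "v \<in> V N - {k}" using RKin2[OF uv u] .
          have "(v,n) \<in> ?RK\<^sup>* \<or> (v,w) \<in> ?RK\<^sup>*" using pt vp by (meson rtrancl_trans)
          then show "v \<in> P0 \<union> (U-{k})" using vV uv by (auto simp: P0_def)
        qed
        then show ?thesis unfolding arcs_in_Int using arcs_in_rt_mono by blast
      qed
      moreover have "(u,w) \<in> (arcs_in N T (P0 \<union> (U - {k})))\<^sup>*"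
        using walkP0[OF _ uw] by simp
      ultimately have "(p,w) \<in> (und_edges N T (P0 \<union> (U-{k})))\<^sup>*"
        by (meson arcs_und und_sym rtrancl_trans)
      then show ?thesis using w by blast
    qed
    moreover have "P0 \<subseteq> V N - U" by (auto simp: P0_def)
    ultimately show ?thesis unfolding good_def by blast
  qed
  define m where "m = (LEAST m. \<exists>P. good P \<and> card P = m)"
  obtain P where gP: "good P" and cP: "card P = m"
    using LeastI_ex[of "\<lambda>m. \<exists>P. good P \<and> card P = m"] goodP0 unfolding m_def by blast
  have minP: "card P \<le> card P'" if "good P'" for P'
    using Least_le[of "\<lambda>m. \<exists>P. good P \<and> card P = m" "card P'"] that cP unfolding m_def by auto
  have PV: "P \<subseteq> V N - U" and nP: "n \<in> P"
    and Pb: "\<forall>p\<in>P. \<exists>z\<in>U. (p,z) \<in> (arcs_in N T (P \<union> U))\<^sup>*"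
    and Pc: "\<forall>p\<in>P. \<exists>z\<in>U-{k}. (p,z) \<in> (und_edges N T (P \<union> (U-{k})))\<^sup>*"
    using gP unfolding good_def by auto
  have finP: "finite P" using PV finite_V by (meson finite_Diff finite_subset)
  define U' where "U' = U \<union> P"
  have U'V: "U' \<subseteq> V N" using UV PV by (auto simp: U'_def)
  have finU': "finite U'" using U'V finite_V finite_subset by blast
  have rooted: "\<forall>v\<in>U'. (v,r) \<in> (arcs_in N T U')\<^sup>*"
  proof
    fix v assume "v \<in> U'"
    then consider "v \<in> U" | "v \<in> P" by (auto simp: U'_def)
    then show "(v,r) \<in> (arcs_in N T U')\<^sup>*"
    proof cases
      case 1 then show ?thesis using rU arcs_in_rt_mono[of v r N T U U'] by (auto simp: U'_def)
    next
      case 2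
      then obtain z where z: "z \<in> U" "(v,z) \<in> (arcs_in N T (P \<union> U))\<^sup>*" using Pb by blast
      have "(z,r) \<in> (arcs_in N T U')\<^sup>*" using rU z(1) arcs_in_rt_mono[of z r N T U U'] by (auto simp: U'_def)
      moreover have "(v,z) \<in> (arcs_in N T U')\<^sup>*" using z(2) by (simp add: U'_def Un_commute)
      ultimately show ?thesis by simp
    qed
  qed
  have card3: "card U' \<ge> 3"
  proof -
    have "{k,w,n} \<subseteq> U'" using k w nP by (auto simp: U'_def)
    moreover have "card {k,w,n} = 3" using w n k by (metis card_3_iff)
    ultimately show ?thesis using finU' by (metis card_mono)
  qed
  have toU: "\<exists>z\<in>U. (a,z) \<in> (und_edges N T U')\<^sup>*" if "a \<in> U'" for a
  proof (cases "a \<in> U")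
    case True then show ?thesis by blast
  next
    case False
    then have "a \<in> P" using that by (auto simp: U'_def)
    then obtain z where "z \<in> U - {k}" "(a,z) \<in> (und_edges N T (P \<union> (U-{k})))\<^sup>*" using Pc by blast
    then show ?thesis using und_rt_mono[of a z N T "P \<union> (U-{k})" U'] by (auto simp: U'_def)
  qed
  have conU': "und_connected N T U'"
    by (rule und_connected_via[OF _ conU toU]) (auto simp: U'_def)
  have conU'x: "und_connected N T (U' - {x})" if x: "x \<in> U'" for x
  proof (cases "x = k")
    case True
    have eq: "U' - {x} = P \<union> (U - {k})" using True PV k by (auto simp: U'_def)
    show ?thesis unfolding eq
    proof (rule und_connected_via[of "U - {k}"])
      show "und_connected N T (U - {k})" using conUx k by blast
      fix a assume "a \<in> P \<union> (U - {k})"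
      then show "\<exists>h\<in>U - {k}. (a, h) \<in> (und_edges N T (P \<union> (U - {k})))\<^sup>*" using Pc by blast
    qed auto
  next
    case False
    have conH: "und_connected N T (U - {x})"
      using conUx conU by (cases "x \<in> U") auto
    show ?thesis
    proof (rule und_connected_via[of "U - {x}"])
      show "U - {x} \<subseteq> U' - {x}" by (auto simp: U'_def)
      show "und_connected N T (U - {x})" by (rule conH)
      fix p assume p: "p \<in> U' - {x}"
      show "\<exists>h\<in>U - {x}. (p, h) \<in> (und_edges N T (U' - {x}))\<^sup>*"
      proof (cases "p \<in> U")
        case True then show ?thesis using p by blast
      next
        case pnU: False
        then have pP: "p \<in> P" using p by (auto simp: U'_def)
        show ?thesis
        proof (rule ccontr)
          assume nc: "\<not> ?thesis"
          define C where "C = {c. (p,c) \<in> (und_edges N T (U' - {x}))\<^sup>*}"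
          have pC: "p \<in> C" by (simp add: C_def)
          have CU': "C \<subseteq> U' - {x}" using und_rt_in_set[of p _ N T "U' - {x}"] p unfolding C_def by blast
          have CU: "C \<inter> U = {}" using nc CU' by (auto simp: C_def)
          have xC: "x \<notin> C" using CU' by auto
          have CP: "C \<subseteq> P" using CU' CU by (auto simp: U'_def)
          have clos: "y \<in> C" if "c \<in> C" "y \<in> U'" "y \<noteq> x" "arc N T c y \<or> arc N T y c" for c y
          proof -
            have "(c,y) \<in> und_edges N T (U' - {x})" using that CU' by (auto simp: und_edges_def)
            then show ?thesis using that(1) by (auto simp: C_def intro: rtrancl_into_rtrancl)
          qed
          define P' where "P' = P - C"
          have "good P'"
          proof -
            have "n \<notin> C"
            proof
              assume nC: "n \<in> C"
              have "k \<in> C" using clos[OF nC, of k] k nk False by (auto simp: U'_def)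
              then show False using CU k by auto
            qed
            then have nP': "n \<in> P'" using nP by (auto simp: P'_def)
            have b: "\<exists>z\<in>U. (q,z) \<in> (arcs_in N T (P' \<union> U))\<^sup>*" if q: "q \<in> P'" for q
            proof -
              obtain z where z: "z \<in> U" "(q,z) \<in> (arcs_in N T (P \<union> U))\<^sup>*" using Pb q by (auto simp: P'_def)
              let ?Rl = "arcs_in N T (P \<union> U)"
              have "(q \<notin> C \<longrightarrow> (q,z) \<in> {(a,b)\<in>?Rl. a\<notin>C \<and> b\<notin>C}\<^sup>*) \<and> (q \<in> C \<longrightarrow> (x,z) \<in> {(a,b)\<in>?Rl. a\<notin>C \<and> b\<notin>C}\<^sup>*)"
              proof (rule avoid[OF z(2) _ xC])
                show "z \<notin> C" using z CU by auto
                fix c y assume "c \<in> C" "(c,y) \<in> ?Rl"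
                then show "y \<in> C \<or> y = x" using clos[of c y] by (auto simp: arcs_in_def U'_def)
              next
                fix a y assume "(a,y) \<in> ?Rl" "y \<in> C"
                then show "a \<in> C \<or> a = x" using clos[of y a] by (auto simp: arcs_in_def U'_def)
              qed
              then have "(q,z) \<in> {(a,b)\<in>?Rl. a\<notin>C \<and> b\<notin>C}\<^sup>*" using q by (auto simp: P'_def)
              moreover have "{(a,b)\<in>?Rl. a\<notin>C \<and> b\<notin>C} \<subseteq> arcs_in N T (P' \<union> U)"
                by (auto simp: arcs_in_def P'_def)
              ultimately show ?thesis using z(1) rtrancl_mono by blast
            qed
            have c: "\<exists>z\<in>U-{k}. (q,z) \<in> (und_edges N T (P' \<union> (U-{k})))\<^sup>*" if q: "q \<in> P'" for q
            proof -
              obtain z where z: "z \<in> U-{k}" "(q,z) \<in> (und_edges N T (P \<union> (U-{k})))\<^sup>*" using Pc q by (auto simp: P'_def)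
              let ?Rl = "und_edges N T (P \<union> (U-{k}))"
              have "(q \<notin> C \<longrightarrow> (q,z) \<in> {(a,b)\<in>?Rl. a\<notin>C \<and> b\<notin>C}\<^sup>*) \<and> (q \<in> C \<longrightarrow> (x,z) \<in> {(a,b)\<in>?Rl. a\<notin>C \<and> b\<notin>C}\<^sup>*)"
              proof (rule avoid[OF z(2) _ xC])
                show "z \<notin> C" using z CU by auto
                fix c y assume "c \<in> C" "(c,y) \<in> ?Rl"
                then show "y \<in> C \<or> y = x" using clos[of c y] by (auto simp: und_edges_def U'_def)
              next
                fix a y assume "(a,y) \<in> ?Rl" "y \<in> C"
                then show "a \<in> C \<or> a = x" using clos[of y a] by (auto simp: und_edges_def U'_def)
              qed
              then have "(q,z) \<in> {(a,b)\<in>?Rl. a\<notin>C \<and> b\<notin>C}\<^sup>*" using q by (auto simp: P'_def)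
              moreover have "{(a,b)\<in>?Rl. a\<notin>C \<and> b\<notin>C} \<subseteq> und_edges N T (P' \<union> (U-{k}))"
                by (auto simp: und_edges_def P'_def)
              ultimately show ?thesis using z(1) rtrancl_mono by blast
            qed
            have "P' \<subseteq> V N - U" using PV by (auto simp: P'_def)
            then show ?thesis unfolding good_def using nP' b c by blast
          qed
          moreover have "card P' < card P"
            unfolding P'_def using pC pP finP by (intro psubset_card_mono) auto
          ultimately show False using minP by fastforce
        qed
      qed
    qed
  qed
  have "directed_subblock N T U'"
    unfolding directed_subblock_def und_biconnected_def
    using U'V rooted rU finU' card3 conU' conU'x by (auto simp: U'_def)
  moreover have "insert n U \<subseteq> U'" using nP by (auto simp: U'_def)
  ultimately show ?thesis by blast
qed




lemma ran_upd_sub: "ran (m(a \<mapsto> b)) \<subseteq> insert b (ran m)"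
  by (auto simp: ran_def)

lemma props_upd:
  assumes "ran \<psi> \<subseteq> {S,I}" "dom \<psi> \<subseteq> V N" "k \<in> V N" "x \<in> {S,I}"
  shows "ran (\<psi>(k\<mapsto>x)) \<subseteq> {S,I} \<and> dom (\<psi>(k\<mapsto>x)) \<subseteq> V N \<and> dom (\<psi>(k\<mapsto>x)) \<noteq> {}"
proof -
  have "ran (\<psi>(k\<mapsto>x)) \<subseteq> {S,I}" using ran_upd_sub[of \<psi> k x] assms by blast
  moreover have "dom (\<psi>(k\<mapsto>x)) = insert k (dom \<psi>)" by simp
  ultimately show ?thesis using assms by (metis insert_not_empty insert_subset)
qed

lemma props_single: "k \<in> V N \<Longrightarrow> x \<in> {S,I} \<Longrightarrow> ran [k\<mapsto>x] \<subseteq> {S,I} \<and> dom [k\<mapsto>x] \<subseteq> V N \<and> dom [k\<mapsto>x] \<noteq> {}"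
  using props_upd[of Map.empty N k x] by simp

lemma ME_props: "\<psi> \<in> ME N T \<Longrightarrow> ran \<psi> \<subseteq> {S,I} \<and> dom \<psi> \<subseteq> V N \<and> dom \<psi> \<noteq> {}"
proof (induction rule: ME.induct)
  case (single_S i) then show ?case using props_single[of i N S] unfolding fun_upd_def by simp
next
  case (single_I i) then show ?case using props_single[of i N I] unfolding fun_upd_def by simp
next
  case (induce \<psi> \<phi>)
  have P: "ran \<psi> \<subseteq> {S,I}" "dom \<psi> \<subseteq> V N" using induce.IH by blast+
  from induce.hyps(3) show ?case unfolding induced_def
  proof (elim UnE)
    assume "\<phi> \<in> {\<psi>}" then show ?thesis using induce.IH by blast
  next
    assume "\<phi> \<in> {\<psi>(k \<mapsto> S) | k. k \<in> dom \<psi> \<and> \<psi> k = Some I \<and> (\<exists>n\<in>dom \<psi>. \<psi> n = Some I \<and> T k n > 0)}"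
    then obtain k where "\<phi> = \<psi>(k \<mapsto> S)" "k \<in> dom \<psi>" by blast
    then show ?thesis using props_upd[OF P, of k S] P by blast
  next
    assume "\<phi> \<in> {\<psi>(k \<mapsto> S, n \<mapsto> I) | k n. k \<in> dom \<psi> \<and> n \<in> V N - dom \<psi> \<and> T k n > 0 \<and>
                        \<not> fE N T {n} (dom \<psi> - {k}) {k}}"
    then obtain k n where "\<phi> = \<psi>(k \<mapsto> S, n \<mapsto> I)" "k \<in> dom \<psi>" "n \<in> V N" by blast
    moreover have "ran (\<psi>(k \<mapsto> S)) \<subseteq> {S,I} \<and> dom (\<psi>(k \<mapsto> S)) \<subseteq> V N"
      using props_upd[OF P, of k S] P \<open>k \<in> dom \<psi>\<close> by blast
    ultimately show ?thesis using props_upd[of "\<psi>(k \<mapsto> S)" N n I] by blast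
  next
    assume "\<phi> \<in> \<Union> {{\<psi>(k \<mapsto> S), [k \<mapsto> S, n \<mapsto> I], [k \<mapsto> S]} | k n.
                        k \<in> dom \<psi> \<and> n \<in> V N - dom \<psi> \<and> T k n > 0 \<and>
                        fE N T {n} (dom \<psi> - {k}) {k}}"
    then obtain k n where ph: "\<phi> \<in> {\<psi>(k \<mapsto> S), [k \<mapsto> S, n \<mapsto> I], [k \<mapsto> S]}" and kn: "k \<in> dom \<psi>" "n \<in> V N" by blast
    have kV: "k \<in> V N" using kn P by blast
    have s1: "ran [k \<mapsto> S] \<subseteq> {S,I} \<and> dom [k \<mapsto> S] \<subseteq> V N" using props_single[OF kV, of S] by blast
    from ph consider "\<phi> = \<psi>(k \<mapsto> S)" | "\<phi> = [k \<mapsto> S, n \<mapsto> I]" | "\<phi> = [k \<mapsto> S]" by blast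
    then show ?thesis
    proof cases
      case 1 then show ?thesis using props_upd[OF P kV, of S] by blast
    next
      case 2 then show ?thesis using props_upd[of "[k \<mapsto> S]" N n I] s1 kn by blast
    next
      case 3 then show ?thesis using props_single[OF kV, of S] by blast
    qed
  qed
qed

definition Inv :: "nat \<Rightarrow> (nat \<Rightarrow> nat \<Rightarrow> real) \<Rightarrow> nat set \<Rightarrow> bool" where
  "Inv N T D \<longleftrightarrow> (\<exists>a\<in>V N. D = {a}) \<or> (\<exists>a b. D = {a,b} \<and> arc N T a b) \<or>
     (\<exists>U. directed_subblock N T U \<and> D \<subseteq> U)"

lemma Inv_I1: "a \<in> V N \<Longrightarrow> Inv N T {a}" unfolding Inv_def by blast
lemma Inv_I2: "arc N T a b \<Longrightarrow> Inv N T {a,b}" unfolding Inv_def by blast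
lemma Inv_I3: "directed_subblock N T U \<Longrightarrow> D \<subseteq> U \<Longrightarrow> Inv N T D" unfolding Inv_def by blast

lemma notfE:
  "\<not> fE N T {n} Y {k} \<Longrightarrow> Y = {} \<or> (\<exists>u. u \<in> V N - {k} \<and> (u,n) \<in> (arcs_in N T (V N - {k}))\<^sup>* \<and>
      (\<exists>y\<in>Y. (u,y) \<in> (arcs_in N T (V N - {k}))\<^sup>*))"
  by (auto simp: fE_def IN_def)

lemma und_connected_small: "D \<subseteq> {c} \<Longrightarrow> und_connected N T D"
  by (auto simp: und_connected_def)

lemma ext_Inv:
  assumes diag: "\<forall>i\<in>V N. T i i = 0" and inv: "Inv N T D" and DV: "D \<subseteq> V N"
    and k: "k \<in> D" and n: "n \<in> V N" "n \<notin> D" and Tkn: "T k n > 0"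
    and nf: "\<not> fE N T {n} (D - {k}) {k}"
  shows "Inv N T (insert n D)"
proof -
  have nk: "arc N T n k" using k DV n Tkn by (auto simp: arc_def)
  from notfE[OF nf] show ?thesis
  proof (elim disjE exE conjE bexE)
    assume "D - {k} = {}"
    then have "insert n D = {n,k}" using k by auto
    then show ?thesis using Inv_I2[OF nk] by simp
  next
    fix u y assume u: "u \<in> V N - {k}" and un: "(u,n) \<in> (arcs_in N T (V N - {k}))\<^sup>*"
      and y: "y \<in> D - {k}" and uy: "(u,y) \<in> (arcs_in N T (V N - {k}))\<^sup>*"
    from inv consider (one) a where "a \<in> V N" "D = {a}" | (two) a b where "D = {a,b}" "arc N T a b"
      | (three) U where "directed_subblock N T U" "D \<subseteq> U" unfolding Inv_def by blast
    then show ?thesis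
    proof cases
      case one then show ?thesis using y k by auto
    next
      case two
      have ab: "a \<noteq> b" using two(2) arc_irrefl[of N T a] diag by metis
      have yD: "y \<in> D" "y \<noteq> k" using y by auto
      have bD: "b \<in> D" using two by auto
      have e: "(a,b) \<in> und_edges N T D" "(b,a) \<in> und_edges N T D" "(a,b) \<in> arcs_in N T D"
        using two by (auto simp: und_edges_def arcs_in_def)
      have rt: "\<forall>v\<in>D. (v, b) \<in> (arcs_in N T D)\<^sup>*"
        using e(3) unfolding two(1) by (auto intro: r_into_rtrancl)
      have cD: "und_connected N T D" 
        using e(1,2) unfolding und_connected_def two(1) by (auto intro: r_into_rtrancl)
      have cDx: "\<forall>x\<in>D. und_connected N T (D - {x})"
      proof
        fix x assume "x \<in> D"
        then have "D - {x} \<subseteq> {a} \<or> D - {x} \<subseteq> {b}" using two by auto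
        then show "und_connected N T (D - {x})" using und_connected_small by blast
      qed
      have "\<exists>U'. insert n D \<subseteq> U' \<and> directed_subblock N T U'"
        by (rule ear[OF diag DV bD rt cD cDx k yD n nk u un uy])
      then show ?thesis using Inv_I3 by blast
    next
      case three
      show ?thesis
      proof (cases "n \<in> U")
        case True then show ?thesis using three Inv_I3[of N T U "insert n D"] by blast
      next
        case False
        from three(1) obtain r where r: "r \<in> U" "\<forall>v\<in>U. (v,r) \<in> (arcs_in N T U)\<^sup>*" and UV: "U \<subseteq> V N"
          and bc: "und_biconnected N T U" unfolding directed_subblock_def by blast
        have cU: "und_connected N T U" "\<forall>x\<in>U. und_connected N T (U - {x})"
          using bc by (auto simp: und_biconnected_def)
        have kU: "k \<in> U" and yU: "y \<in> U" "y \<noteq> k" using k y three(2) by auto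
        have "\<exists>U'. insert n U \<subseteq> U' \<and> directed_subblock N T U'"
          by (rule ear[OF diag UV r cU kU yU n(1) False nk u un uy])
        then show ?thesis using three Inv_I3 by (metis insert_mono order_trans)
      qed
    qed
  qed
qed

lemma Inv_ME:
  assumes diag: "\<forall>i\<in>V N. T i i = 0"
  shows "\<psi> \<in> ME N T \<Longrightarrow> Inv N T (dom \<psi>)"
proof (induction rule: ME.induct)
  case (single_S i) then show ?case using Inv_I1[of i N T] unfolding fun_upd_def by (simp add: dom_def)
next
  case (single_I i) then show ?case using Inv_I1[of i N T] unfolding fun_upd_def by (simp add: dom_def)
next
  case (induce \<psi> \<phi>)
  have DV: "dom \<psi> \<subseteq> V N" using ME_props[OF induce.hyps(1)] by blast
  from induce.hyps(3) show ?case unfolding induced_def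
  proof (elim UnE)
    assume "\<phi> \<in> {\<psi>}" then show ?thesis using induce by auto
  next
    assume "\<phi> \<in> {\<psi>(k \<mapsto> S) | k. k \<in> dom \<psi> \<and> \<psi> k = Some I \<and> (\<exists>n\<in>dom \<psi>. \<psi> n = Some I \<and> T k n > 0)}"
    then obtain k where "\<phi> = \<psi>(k \<mapsto> S)" "k \<in> dom \<psi>" by blast
    then have "dom \<phi> = dom \<psi>" by auto
    then show ?thesis using induce by simp
  next
    assume "\<phi> \<in> {\<psi>(k \<mapsto> S, n \<mapsto> I) | k n. k \<in> dom \<psi> \<and> n \<in> V N - dom \<psi> \<and> T k n > 0 \<and>
                        \<not> fE N T {n} (dom \<psi> - {k}) {k}}"
    then obtain k n where ph: "\<phi> = \<psi>(k \<mapsto> S, n \<mapsto> I)" and kn: "k \<in> dom \<psi>" "n \<in> V N" "n \<notin> dom \<psi>" "T k n > 0"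
      "\<not> fE N T {n} (dom \<psi> - {k}) {k}" by blast
    have d: "dom \<phi> = insert n (dom \<psi>)" using ph kn(1) by auto
    have "Inv N T (insert n (dom \<psi>))" by (rule ext_Inv[OF diag induce.IH DV kn])
    then show ?thesis using d by simp
  next
    assume "\<phi> \<in> \<Union> {{\<psi>(k \<mapsto> S), [k \<mapsto> S, n \<mapsto> I], [k \<mapsto> S]} | k n.
                        k \<in> dom \<psi> \<and> n \<in> V N - dom \<psi> \<and> T k n > 0 \<and>
                        fE N T {n} (dom \<psi> - {k}) {k}}"
    then obtain k n where ph: "\<phi> \<in> {\<psi>(k \<mapsto> S), [k \<mapsto> S, n \<mapsto> I], [k \<mapsto> S]}" and
       kn: "k \<in> dom \<psi>" "n \<in> V N" "T k n > 0" by blast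
    have kV: "k \<in> V N" using kn DV by auto
    have nk: "arc N T n k" using kV kn by (auto simp: arc_def)
    from ph consider "\<phi> = \<psi>(k \<mapsto> S)" | "\<phi> = [k \<mapsto> S, n \<mapsto> I]" | "\<phi> = [k \<mapsto> S]" by blast
    then show ?thesis
    proof cases
      case 1 then have "dom \<phi> = dom \<psi>" using kn by auto
      then show ?thesis using induce by simp
    next
      case 2 then have "dom \<phi> = {n,k}" by auto
      then show ?thesis using Inv_I2[OF nk] by simp
    next
      case 3 then have "dom \<phi> = {k}" by simp
      then show ?thesis using Inv_I1[OF kV, of T] by simp
    qed
  qed
qed

lemma dsb_TB:
  assumes "directed_subblock N T U"
  shows "\<exists>W. U \<subseteq> W \<and> transmission_block N T W"
proof -
  define A where "A = {W. U \<subseteq> W \<and> directed_subblock N T W}"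
  have "A \<subseteq> Pow (V N)" unfolding A_def directed_subblock_def by blast
  then have finA: "finite A" by (rule finite_subset) (simp add: finite_V)
  have UA: "U \<in> A" using assms by (simp add: A_def)
  obtain W where W: "W \<in> A" "\<forall>b\<in>A. W \<le> b \<longrightarrow> W = b"
    using finite_has_maximal[OF finA] UA by blast
  have "transmission_block N T W"
    unfolding transmission_block_def
  proof
    show "directed_subblock N T W" using W(1) by (simp add: A_def)
    show "\<not> (\<exists>U'. W \<subset> U' \<and> directed_subblock N T U')"
    proof
      assume "\<exists>U'. W \<subset> U' \<and> directed_subblock N T U'"
      then obtain U' where U': "W \<subset> U'" "directed_subblock N T U'" by blast
      have "U \<subseteq> W" using W(1) by (simp add: A_def)
      then have U'A: "U' \<in> A" using U' unfolding A_def by auto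
      have "W \<le> U'" using U'(1) by simp
      then have "W = U'" using W(2) U'A by simp
      then show False using U'(1) by simp
    qed
  qed
  moreover have "U \<subseteq> W" using W(1) by (simp add: A_def)
  ultimately show ?thesis by blast
qed

lemma upper:
  assumes diag: "\<forall>i\<in>V N. T i i = 0" and "\<psi> \<in> ME N T"
  shows "card (dom \<psi>) \<le> 2 \<or> (\<exists>W. transmission_block N T W \<and> dom \<psi> \<subseteq> W)"
proof -
  have "Inv N T (dom \<psi>)" by (rule Inv_ME[OF diag assms(2)])
  then have "(\<exists>a\<in>V N. dom \<psi> = {a}) \<or> (\<exists>a b. dom \<psi> = {a,b} \<and> arc N T a b) \<or>
     (\<exists>U. directed_subblock N T U \<and> dom \<psi> \<subseteq> U)" unfolding Inv_def .
  then show ?thesis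
  proof (elim disjE bexE exE conjE)
    fix a assume "dom \<psi> = {a}" then show ?thesis by simp
  next
    fix a b assume "dom \<psi> = {a,b}" then show ?thesis by (simp add: card_insert_le_m1)
  next
    fix U assume "directed_subblock N T U" "dom \<psi> \<subseteq> U"
    then show ?thesis using dsb_TB by (meson order_trans)
  qed
qed




lemma entry:
  assumes "(a,b) \<in> (arcs_in N T W)\<^sup>*" "b \<in> X"
  shows "a \<in> W - X \<longrightarrow> (\<exists>n x. n \<in> W - X \<and> x \<in> X \<and> (a,n) \<in> (arcs_in N T (W - X))\<^sup>* \<and> arc N T n x)"
  using assms(1)
proof (induction rule: converse_rtrancl_induct)
  case base then show ?case using assms(2) by auto
next
  case (step y z)
  show ?case
  proof
    assume y: "y \<in> W - X"
    show "\<exists>n x. n \<in> W - X \<and> x \<in> X \<and> (y,n) \<in> (arcs_in N T (W - X))\<^sup>* \<and> arc N T n x"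
    proof (cases "z \<in> X")
      case True
      then show ?thesis using y step.hyps(1) by (auto simp: arcs_in_def)
    next
      case False
      then have zW: "z \<in> W - X" using step.hyps(1) by (auto simp: arcs_in_def)
      then obtain n x where nx: "n \<in> W - X" "x \<in> X" "(z,n) \<in> (arcs_in N T (W - X))\<^sup>*" "arc N T n x"
        using step.IH by blast
      have "(y,z) \<in> arcs_in N T (W - X)" using y zW step.hyps(1) by (auto simp: arcs_in_def)
      then have "(y,n) \<in> (arcs_in N T (W - X))\<^sup>*" using nx(3) by (rule converse_rtrancl_into_rtrancl)
      then show ?thesis using nx by blast
    qed
  qed
qed

lemma grow:
  assumes diag: "\<forall>i\<in>V N. T i i = 0" and dsb: "directed_subblock N T W"
    and r: "r \<in> W" "\<forall>v\<in>W. (v,r) \<in> (arcs_in N T W)\<^sup>*"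
    and X: "X \<subseteq> W" "r \<in> X" "X \<noteq> W"
  shows "\<exists>k\<in>X. \<exists>n\<in>W-X. arc N T n k \<and> \<not> fE N T {n} (X - {k}) {k}"
proof (rule ccontr)
  assume H0: "\<not> ?thesis"
  have H: "fE N T {n} (X - {k}) {k}" if "k \<in> X" "n \<in> W - X" "arc N T n k" for k n
    using H0 that by blast
  have WV: "W \<subseteq> V N" using dsb by (simp add: directed_subblock_def)
  have bc: "und_biconnected N T W" using dsb by (simp add: directed_subblock_def)
  obtain y0 where y0: "y0 \<in> W - X" using X by blast
  obtain n0 k where nk0: "n0 \<in> W - X" "k \<in> X" "(y0,n0) \<in> (arcs_in N T (W - X))\<^sup>*" "arc N T n0 k"
    using entry[OF r(2)[rule_format, of y0] X(2)] y0 by blast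
  have fk0: "fE N T {n0} (X - {k}) {k}" using H nk0 by blast
  then have Xk: "X - {k} \<noteq> {}" by (simp add: fE_def)
  let ?RK = "arcs_in N T (V N - {k})"
  let ?RY = "arcs_in N T (W - X)"
  have RYK: "(a,b) \<in> ?RK\<^sup>*" if "(a,b) \<in> ?RY\<^sup>*" for a b
    using arcs_in_rt_mono[OF that, of "V N - {k}"] WV nk0(2) by blast
  have goodk: False if "n \<in> W - X" "arc N T n k" "u \<in> V N - {k}" "(u,n) \<in> ?RK\<^sup>*"
      "z \<in> X - {k}" "(u,z) \<in> ?RK\<^sup>*" for n u z
  proof -
    have "fE N T {n} (X - {k}) {k}" using H nk0(2) that(1,2) by blast
    moreover have "u \<in> IN N T {k} {n}" using that by (auto simp: IN_def)
    moreover have "u \<in> IN N T {k} (X - {k})" using that by (auto simp: IN_def)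
    ultimately show False by (auto simp: fE_def)
  qed
  define C where "C = {y \<in> W - X. \<exists>n\<in>W - X. (y,n) \<in> ?RY\<^sup>* \<and> arc N T n k}"
  have kW: "k \<in> W" using nk0(2) X by blast
  have clos: "y \<in> C" if c: "c \<in> C" and yW: "y \<in> W - {k}" and e: "arc N T c y \<or> arc N T y c" for c y
  proof -
    obtain n where n: "n \<in> W - X" "(c,n) \<in> ?RY\<^sup>*" "arc N T n k" and cY: "c \<in> W - X"
      using c by (auto simp: C_def)
    have cV: "c \<in> V N - {k}" using cY WV nk0(2) by blast
    have yV: "y \<in> V N - {k}" using yW WV by blast
    have cn: "(c,n) \<in> ?RK\<^sup>*" using RYK n(2) .
    show ?thesis
    proof (cases "y \<in> X")
      case True
      then have yk: "y \<in> X - {k}" using yW by blast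
      from e show ?thesis
      proof
        assume "arc N T c y"
        then have "(c,y) \<in> ?RK" using cV yV by (auto simp: arcs_in_def)
        then show ?thesis using goodk[OF n(1) n(3) cV cn yk] by blast
      next
        assume "arc N T y c"
        then have "(y,c) \<in> ?RK" using cV yV by (auto simp: arcs_in_def)
        then have "(y,n) \<in> ?RK\<^sup>*" using cn by (rule converse_rtrancl_into_rtrancl)
        then show ?thesis using goodk[OF n(1) n(3) yV _ yk] by blast
      qed
    next
      case False
      then have yY: "y \<in> W - X" using yW by blast
      from e show ?thesis
      proof
        assume "arc N T y c"
        then have "(y,c) \<in> ?RY" using cY yY by (auto simp: arcs_in_def)
        then have "(y,n) \<in> ?RY\<^sup>*" using n(2) by (rule converse_rtrancl_into_rtrancl)
        then show ?thesis using yY n by (auto simp: C_def)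
      next
        assume cy: "arc N T c y"
        obtain n' x' where nx: "n' \<in> W - X" "x' \<in> X" "(y,n') \<in> ?RY\<^sup>*" "arc N T n' x'"
          using entry[OF r(2)[rule_format, of y] X(2)] yY by blast
        show ?thesis
        proof (cases "x' = k")
          case True then show ?thesis using yY nx by (auto simp: C_def)
        next
          case False
          have x'V: "x' \<in> V N - {k}" using nx(2) X WV False by blast
          have n'V: "n' \<in> V N - {k}" using nx(1) WV nk0(2) by blast
          have "(c,y) \<in> ?RK" using cy cV yV by (auto simp: arcs_in_def)
          moreover have "(y,n') \<in> ?RK\<^sup>*" using RYK nx(3) .
          moreover have "(n',x') \<in> ?RK" using nx(4) n'V x'V by (auto simp: arcs_in_def)
          ultimately have "(c,x') \<in> ?RK\<^sup>*" by (meson converse_rtrancl_into_rtrancl rtrancl.rtrancl_into_rtrancl)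
          then show ?thesis using goodk[OF n(1) n(3) cV cn] nx(2) False by blast
        qed
      qed
    qed
  qed
  have y0C: "y0 \<in> C" using y0 nk0 by (auto simp: C_def)
  obtain z where z: "z \<in> X - {k}" using Xk by blast
  have "und_connected N T (W - {k})" using bc kW by (simp add: und_biconnected_def)
  then have "(y0,z) \<in> (und_edges N T (W - {k}))\<^sup>*" using y0 z X nk0 unfolding und_connected_def by blast
  then have "z \<in> C"
  proof (induction rule: rtrancl_induct)
    case base then show ?case using y0C .
  next
    case (step b c)
    then show ?case using clos[of b c] by (auto simp: und_edges_def)
  qed
  then show False using z by (auto simp: C_def)
qed

lemma ME_ext:
  assumes "\<psi> \<in> ME N T" "k \<in> dom \<psi>" "n \<in> V N" "n \<notin> dom \<psi>" "T k n > 0"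
    "\<not> fE N T {n} (dom \<psi> - {k}) {k}"
  shows "\<psi>(k \<mapsto> S, n \<mapsto> I) \<in> ME N T"
proof (rule ME.induce[OF assms(1)])
  show "ran \<psi> \<subseteq> {S, I}" using ME_props[OF assms(1)] by blast
  show "\<psi>(k \<mapsto> S, n \<mapsto> I) \<in> induced N T \<psi>"
    unfolding induced_def using assms(2-6) by blast
qed

lemma realize:
  assumes diag: "\<forall>i\<in>V N. T i i = 0" and dsb: "directed_subblock N T W"
  shows "\<exists>\<psi>\<in>ME N T. dom \<psi> = W"
proof -
  obtain r where r: "r \<in> W" "\<forall>v\<in>W. (v,r) \<in> (arcs_in N T W)\<^sup>*" and WV: "W \<subseteq> V N"
    using dsb by (auto simp: directed_subblock_def)
  have finW: "finite W" using WV finite_V finite_subset by blast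
  have "\<forall>m. m < card W \<longrightarrow> (\<exists>\<psi>\<in>ME N T. r \<in> dom \<psi> \<and> dom \<psi> \<subseteq> W \<and> card (dom \<psi>) = Suc m)"
  proof
    fix m show "m < card W \<longrightarrow> (\<exists>\<psi>\<in>ME N T. r \<in> dom \<psi> \<and> dom \<psi> \<subseteq> W \<and> card (dom \<psi>) = Suc m)"
    proof (induction m)
      case 0
      have "[r \<mapsto> S] \<in> ME N T" using r WV by (auto intro: ME.single_S)
      moreover have "r \<in> dom [r \<mapsto> S] \<and> dom [r \<mapsto> S] \<subseteq> W \<and> card (dom [r \<mapsto> S]) = Suc 0" using r by simp
      ultimately show ?case by blast
    next
      case (Suc m)
      show ?case
      proof
        assume sm: "Suc m < card W"
        then obtain \<psi> where psi: "\<psi> \<in> ME N T" "r \<in> dom \<psi>" "dom \<psi> \<subseteq> W" "card (dom \<psi>) = Suc m"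
          using Suc.IH by auto
        have "dom \<psi> \<noteq> W" using psi(4) sm by auto
        then obtain k n where kn: "k \<in> dom \<psi>" "n \<in> W - dom \<psi>" "arc N T n k" "\<not> fE N T {n} (dom \<psi> - {k}) {k}"
          using grow[OF diag dsb r psi(3) psi(2)] by blast
        have nV: "n \<in> V N" using kn(2) WV by blast
        have Tkn: "T k n > 0" using kn(3) by (simp add: arc_def)
        have new: "\<psi>(k \<mapsto> S, n \<mapsto> I) \<in> ME N T"
          using ME_ext[OF psi(1) kn(1) nV _ Tkn kn(4)] kn(2) by blast
        have d: "dom (\<psi>(k \<mapsto> S, n \<mapsto> I)) = insert n (dom \<psi>)" using kn(1) by auto
        have fin: "finite (dom \<psi>)" using psi(3) finW finite_subset by blast
        have "card (insert n (dom \<psi>)) = Suc (Suc m)" using fin kn(2) psi(4) by simp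
        then show "\<exists>\<psi>\<in>ME N T. r \<in> dom \<psi> \<and> dom \<psi> \<subseteq> W \<and> card (dom \<psi>) = Suc (Suc m)"
          using new d psi(2,3) kn(2) by (intro bexI[of _ "\<psi>(k \<mapsto> S, n \<mapsto> I)"]) auto
      qed
    qed
  qed
  moreover have "card W > 0" using r finW by (auto simp: card_gt_0_iff)
  then have "card W - 1 < card W" by simp
  ultimately obtain \<psi> where psi: "\<psi> \<in> ME N T" "dom \<psi> \<subseteq> W" "card (dom \<psi>) = Suc (card W - 1)"
    by blast
  have "card (dom \<psi>) = card W" using psi(3) \<open>card W > 0\<close> by simp
  then have "dom \<psi> = W" using card_subset_eq[OF finW psi(2)] by simp
  then show ?thesis using psi(1) by blast
qed

theorem theorem4:
  fixes N :: nat and T :: "nat \<Rightarrow> nat \<Rightarrow> real"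
  assumes nonneg: "\<forall>i\<in>V N. \<forall>j\<in>V N. T i j \<ge> 0"
    and diag: "\<forall>i\<in>V N. T i i = 0"
    and has_arc: "\<exists>i\<in>V N. \<exists>j\<in>V N. T i j > 0"
  shows "Max (card ` dom ` ME N T) =
           (if \<exists>W. transmission_block N T W
            then Max (card ` {W. transmission_block N T W})
            else 2)"
proof -
  let ?M = "card ` dom ` ME N T"
  have finM: "finite ?M"
  proof (rule finite_subset)
    show "?M \<subseteq> {..N}"
    proof
      fix m assume "m \<in> ?M"
      then obtain \<psi> where "\<psi> \<in> ME N T" "m = card (dom \<psi>)" by blast
      then have "dom \<psi> \<subseteq> V N" "m = card (dom \<psi>)" using ME_props by blast+
      then have "m \<le> card (V N)" by (simp add: card_mono finite_V)
      then show "m \<in> {..N}" by (simp add: V_def)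
    qed
  qed simp
  obtain i j where ij: "i \<in> V N" "j \<in> V N" "T i j > 0" using has_arc by blast
  have ijne: "i \<noteq> j" using ij diag by auto
  have two: "2 \<in> ?M"
  proof -
    have s: "[i \<mapsto> S] \<in> ME N T" using ij by (auto intro: ME.single_S)
    have "\<not> fE N T {j} (dom [i \<mapsto> S] - {i}) {i}" by (simp add: fE_def)
    then have "[i \<mapsto> S, j \<mapsto> I] \<in> ME N T" using ME_ext[OF s, of i j] ij ijne by simp
    moreover have "card (dom [i \<mapsto> S, j \<mapsto> I]) = 2" using ijne by simp
    ultimately show ?thesis by (metis image_eqI)
  qed
  have up: "card (dom \<psi>) \<le> 2 \<or> (\<exists>W. transmission_block N T W \<and> dom \<psi> \<subseteq> W)" if "\<psi> \<in> ME N T" for \<psi>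
    using upper[OF diag that] .
  show ?thesis
  proof (cases "\<exists>W. transmission_block N T W")
    case True
    let ?B = "card ` {W. transmission_block N T W}"
    have "{W. transmission_block N T W} \<subseteq> Pow (V N)"
      unfolding transmission_block_def directed_subblock_def by blast
    then have finB: "finite ?B" using finite_V by (meson finite_Pow_iff finite_imageI finite_subset)
    have neB: "?B \<noteq> {}" using True by blast
    obtain W0 where W0: "transmission_block N T W0" "card W0 = Max ?B"
      using Max_in[OF finB neB] by auto
    have W0d: "directed_subblock N T W0" using W0(1) by (simp add: transmission_block_def)
    have c3: "card W0 \<ge> 3" using W0d by (simp add: directed_subblock_def und_biconnected_def)
    have inM: "Max ?B \<in> ?M"
    proof -
      obtain \<psi> where "\<psi> \<in> ME N T" "dom \<psi> = W0" using realize[OF diag W0d] by blast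
      then show ?thesis using W0(2) by (metis image_eqI)
    qed
    have "Max ?M = Max ?B"
    proof (rule Max_eqI[OF finM _ inM])
      fix y assume "y \<in> ?M"
      then obtain \<psi> where psi: "\<psi> \<in> ME N T" "y = card (dom \<psi>)" by blast
      from up[OF psi(1)] show "y \<le> Max ?B"
      proof
        assume "card (dom \<psi>) \<le> 2" then show ?thesis using psi c3 W0(2) by linarith
      next
        assume "\<exists>W. transmission_block N T W \<and> dom \<psi> \<subseteq> W"
        then obtain W where W: "transmission_block N T W" "dom \<psi> \<subseteq> W" by blast
        have "finite W" using W(1) finite_V finite_subset
          unfolding transmission_block_def directed_subblock_def by blast
        then have "card (dom \<psi>) \<le> card W" using W(2) card_mono by blast
        also have "card W \<le> Max ?B" using finB W(1) by simp
        finally show ?thesis using psi(2) by simp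
      qed
    qed
    then show ?thesis using True by simp
  next
    case False
    have "Max ?M = 2"
    proof (rule Max_eqI[OF finM _ two])
      fix y assume "y \<in> ?M"
      then obtain \<psi> where psi: "\<psi> \<in> ME N T" "y = card (dom \<psi>)" by blast
      then show "y \<le> 2" using up[OF psi(1)] False by blast
    qed
    then show ?thesis using False by simp
  qed
qed


end
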